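(* Let $A=(a_{ij})_{i,j\in I}$ be a random matrix with nonnegative off-diagonal entries, let $L$ be its (random) Laplacian, define $a_{ii}:=1-\sum_{j\ne i}a_{ij}$, and let $\alpha>0$ be a constant such that almost surely $a_{ii}\ge\alpha$ for all $i\in I$. Suppose $\mathbf{1}^*\mathbb{E}(L)=0$ and that there exists $\beta>0$ with $\mathbb{E}(L^*\mathbf{1}\mathbf{1}^*L)\le\beta\,\mathbb{E}(L+L^* )$. Then $$\mathbb{E}(L^*\mathbf{1}\mathbf{1}^*L)\le\gamma\,\mathbb{E}(L+L^*-L^*L)\quad\text{with }\gamma=\frac{\beta}{\alpha}.$$
   Context: $I$ is a finite set. The Laplacian $L$ of a matrix $A$ with nonnegative off-diagonal entries is defined by $L_{ij}=-A_{ij}$ for $i\ne j$ and $L_{ii}=\sum_{j\ne i}A_{ij}$. $\mathbf{1}$ is the all-ones vector, $M^*$ is the transpose. For square matrices, $A\le B$ means $A-B$ is negative semidefinite. *)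

theory Defs
  imports "HOL-Probability.Probability"
begin

text \<open>Matrices indexed by a finite type 'n (the finite index set I).\<close>

definition laplacian :: "real^'n^'n \<Rightarrow> real^'n^'n" where
  "laplacian A = (\<chi> i j. if i = j then (\<Sum>k\<in>UNIV - {i}. A $ i $ k) else - (A $ i $ j))"

definition ones :: "real^'n" where
  "ones = (\<chi> i. 1)"

definition outer :: "real^'n \<Rightarrow> real^'n \<Rightarrow> real^'n^'n" where
  "outer u v = (\<chi> i j. u $ i * v $ j)"

definition mexp :: "'w measure \<Rightarrow> ('w \<Rightarrow> real^'n^'n) \<Rightarrow> real^'n^'n" where
  "mexp M X = (\<chi> i j. integral\<^sup>L M (\<lambda>w. X w $ i $ j))"

definition mat_le :: "real^'n^'n \<Rightarrow> real^'n^'n \<Rightarrow> bool" where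
  "mat_le A B \<longleftrightarrow> (\<forall>x. x \<bullet> ((A - B) *v x) \<le> 0)"

end

theory Submission
  imports Defs
begin

lemma tr_inner: "x \<bullet> (transpose (L::real^'n^'n) *v y) = y \<bullet> (L *v x)"
  by (simp add: dot_lmul_matrix[symmetric] inner_commute)

lemma wcs:
  fixes b d :: "'n::finite \<Rightarrow> real"
  assumes "\<And>j. 0 \<le> b j"
  shows "(\<Sum>j\<in>UNIV. b j * d j)^2 \<le> (\<Sum>j\<in>UNIV. b j) * (\<Sum>j\<in>UNIV. b j * (d j)^2)"
proof -
  have "(\<Sum>j\<in>UNIV. sqrt (b j) * (sqrt (b j) * d j))^2 \<le> (\<Sum>j\<in>UNIV. (sqrt (b j))^2) * (\<Sum>j\<in>UNIV. (sqrt (b j) * d j)^2)"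
    by (rule Cauchy_Schwarz_ineq_sum)
  moreover have "\<And>j. sqrt (b j) * (sqrt (b j) * d j) = b j * d j"
    using assms by (simp add: mult.assoc[symmetric])
  moreover have "\<And>j. (sqrt (b j) * d j)^2 = b j * (d j)^2"
    using assms by (simp add: power_mult_distrib)
  ultimately show ?thesis using assms by simp
qed

lemma pointwise:
  fixes A :: "real^'n^'n" and x :: "real^'n"
  assumes nn: "\<forall>i j. i \<noteq> j \<longrightarrow> 0 \<le> A$i$j"
    and al: "\<forall>i. \<alpha> \<le> 1 - (\<Sum>j\<in>UNIV-{i}. A$i$j)"
  shows "(1-\<alpha>) * (\<Sum>j\<in>UNIV. (ones v* laplacian A)$j * (x$j)^2)
    \<le> x \<bullet> ((laplacian A + transpose (laplacian A) - transpose (laplacian A) ** laplacian A) *v x)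
       - \<alpha> * (x \<bullet> ((laplacian A + transpose (laplacian A)) *v x))"
proof -
  define L where "L = laplacian A"
  define B where "B = (\<lambda>i j. if i = j then 0 else A$i$j)"
  define s where "s = (\<lambda>i. \<Sum>j\<in>UNIV. B i j)"
  have Bnn: "\<And>i j. 0 \<le> B i j" using nn by (simp add: B_def)
  have sB: "(\<Sum>j\<in>UNIV-{i}. A$i$j) = s i" for i
  proof -
    have "s i = B i i + (\<Sum>j\<in>UNIV-{i}. B i j)"
      unfolding s_def by (simp add: sum.remove[of UNIV i])
    also have "\<dots> = (\<Sum>j\<in>UNIV-{i}. A$i$j)"
      by (simp add: B_def)
    finally show ?thesis by simp
  qed
  have Lij: "L$i$j = (if i = j then s i else 0) - B i j" for i j
    by (simp add: L_def laplacian_def sB B_def)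
  define r where "r = (\<lambda>i. (L *v x)$i)"
  have r: "r i = (\<Sum>j\<in>UNIV. B i j * (x$i - x$j))" for i
  proof -
    have "r i = (\<Sum>j\<in>UNIV. ((if i = j then s i else 0) - B i j) * x$j)"
      by (simp add: r_def matrix_vector_mult_def Lij)
    also have "\<dots> = s i * x$i - (\<Sum>j\<in>UNIV. B i j * x$j)"
      by (simp add: left_diff_distrib sum_subtractf if_distrib[of "\<lambda>t. t * _"] cong: if_cong)
    also have "\<dots> = (\<Sum>j\<in>UNIV. B i j * (x$i - x$j))"
      by (simp add: s_def right_diff_distrib sum_subtractf sum_distrib_right sum_distrib_left mult.commute)
    finally show ?thesis .
  qed
  have q1: "x \<bullet> (L *v x) = (\<Sum>i\<in>UNIV. x$i * r i)"
    by (simp add: inner_vec_def r_def)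
  have q2: "x \<bullet> (transpose L *v x) = (\<Sum>i\<in>UNIV. x$i * r i)"
    unfolding tr_inner q1 ..
  have q3: "x \<bullet> ((transpose L ** L) *v x) = (\<Sum>i\<in>UNIV. (r i)^2)"
    unfolding matrix_vector_mul_assoc[symmetric] tr_inner by (simp add: inner_vec_def r_def power2_eq_square)
  define Q where "Q = (\<lambda>i. \<Sum>j\<in>UNIV. B i j * (x$i - x$j)^2)"
  define C where "C = (\<Sum>j\<in>UNIV. (ones v* L)$j * (x$j)^2)"
  have F2: "(r i)^2 \<le> (1-\<alpha>) * Q i" for i
  proof -
    have "(r i)^2 \<le> s i * Q i"
      unfolding r s_def Q_def by (rule wcs) (simp add: Bnn)
    also have "\<dots> \<le> (1-\<alpha>) * Q i"
      using spec[OF al, of i] sB[of i] by (intro mult_right_mono) (auto simp: Q_def Bnn intro!: sum_nonneg)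
    finally show ?thesis .
  qed
  have c: "(ones v* L)$j = s j - (\<Sum>i\<in>UNIV. B i j)" for j
    by (simp add: vector_matrix_mult_def ones_def Lij sum_subtractf)
  have F1: "2 * (\<Sum>i\<in>UNIV. x$i * r i) = (\<Sum>i\<in>UNIV. Q i) + C"
  proof -
    have e: "2 * (x$i * r i) = Q i + (\<Sum>j\<in>UNIV. B i j * (x$i)^2) - (\<Sum>j\<in>UNIV. B i j * (x$j)^2)" for i
      unfolding r Q_def
      by (simp add: sum_distrib_left sum_subtractf[symmetric] sum.distrib[symmetric] algebra_simps power2_eq_square)
    have "2 * (\<Sum>i\<in>UNIV. x$i * r i) = (\<Sum>i\<in>UNIV. Q i) + (\<Sum>i\<in>UNIV. \<Sum>j\<in>UNIV. B i j * (x$i)^2) - (\<Sum>i\<in>UNIV. \<Sum>j\<in>UNIV. B i j * (x$j)^2)"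
      by (simp add: sum_distrib_left e sum.distrib sum_subtractf)
    also have "(\<Sum>i\<in>UNIV. \<Sum>j\<in>UNIV. B i j * (x$i)^2) = (\<Sum>j\<in>UNIV. s j * (x$j)^2)"
      by (simp add: s_def sum_distrib_right)
    also have "(\<Sum>i\<in>UNIV. \<Sum>j\<in>UNIV. B i j * (x$j)^2) = (\<Sum>j\<in>UNIV. (\<Sum>i\<in>UNIV. B i j) * (x$j)^2)"
      by (subst sum.swap) (simp add: sum_distrib_right)
    also have "(\<Sum>i\<in>UNIV. Q i) + (\<Sum>j\<in>UNIV. s j * (x$j)^2) - (\<Sum>j\<in>UNIV. (\<Sum>i\<in>UNIV. B i j) * (x$j)^2) = (\<Sum>i\<in>UNIV. Q i) + C"
      by (simp add: C_def c left_diff_distrib sum_subtractf)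
    finally show ?thesis .
  qed
  have S: "(\<Sum>i\<in>UNIV. (r i)^2) \<le> (1-\<alpha>) * (\<Sum>i\<in>UNIV. Q i)"
    by (simp add: sum_distrib_left sum_mono F2)
  have "x \<bullet> ((L + transpose L - transpose L ** L) *v x) - \<alpha> * (x \<bullet> ((L + transpose L) *v x))
      = (1-\<alpha>) * (2 * (\<Sum>i\<in>UNIV. x$i * r i)) - (\<Sum>i\<in>UNIV. (r i)^2)"
    by (simp del: transpose_matrix_vector add: matrix_vector_mult_add_rdistrib matrix_vector_mult_diff_rdistrib inner_add_right inner_diff_right q1 q2 q3 algebra_simps)
  also have "\<dots> = (1-\<alpha>) * ((\<Sum>i\<in>UNIV. Q i) + C) - (\<Sum>i\<in>UNIV. (r i)^2)" by (simp add: F1)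
  finally show ?thesis using S unfolding L_def[symmetric] C_def[symmetric]
    by (simp add: algebra_simps)
qed


definition bnd :: "'w measure \<Rightarrow> ('w \<Rightarrow> real^'n^'n) \<Rightarrow> real \<Rightarrow> bool" where
  "bnd M X K \<longleftrightarrow> (\<forall>i j. (\<lambda>w. X w $i$j) \<in> borel_measurable M) \<and> (AE w in M. \<forall>i j. \<bar>X w $i$j\<bar> \<le> K)"

lemma bnd_plus: assumes X: "bnd M X K1" and Y: "bnd M Y K2" shows "bnd M (\<lambda>w. X w + Y w) (K1+K2)"
proof -
  have "AE w in M. \<forall>i j. \<bar>(X w + Y w) $i$j\<bar> \<le> K1 + K2"
    using X[unfolded bnd_def, THEN conjunct2] Y[unfolded bnd_def, THEN conjunct2]
  proof eventually_elim
    case (elim w) then show ?case by (auto intro!: order_trans[OF abs_triangle_ineq] add_mono)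
  qed
  then show ?thesis using X Y unfolding bnd_def by (auto intro!: borel_measurable_add)
qed

lemma bnd_minus: assumes X: "bnd M X K1" and Y: "bnd M Y K2" shows "bnd M (\<lambda>w. X w - Y w) (K1+K2)"
proof -
  have "AE w in M. \<forall>i j. \<bar>(X w - Y w) $i$j\<bar> \<le> K1 + K2"
    using X[unfolded bnd_def, THEN conjunct2] Y[unfolded bnd_def, THEN conjunct2]
  proof eventually_elim
    case (elim w) then show ?case by (auto intro!: order_trans[OF abs_triangle_ineq4] add_mono)
  qed
  then show ?thesis using X Y unfolding bnd_def by (auto intro!: borel_measurable_diff)
qed

lemma bnd_transpose: "bnd M X K \<Longrightarrow> bnd M (\<lambda>w. transpose (X w)) K"
  unfolding bnd_def by (auto simp: transpose_def)

lemma bnd_mult: fixes X Y :: "'w \<Rightarrow> real^'n^'n" shows "bnd M X K1 \<Longrightarrow> bnd M Y K2 \<Longrightarrow> bnd M (\<lambda>w. X w ** Y w) (of_nat CARD('n) * (K1*K2))"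
proof -
  assume X: "bnd M X K1" and Y: "bnd M Y K2"
  have m: "(\<lambda>w. (X w ** Y w) $i$j) \<in> borel_measurable M" for i j
    using X Y unfolding bnd_def matrix_matrix_mult_def by (auto intro!: borel_measurable_sum borel_measurable_times)
  have "AE w in M. \<forall>i j. \<bar>(X w ** Y w) $i$j\<bar> \<le> of_nat CARD('n) * (K1*K2)"
    using X[unfolded bnd_def, THEN conjunct2] Y[unfolded bnd_def, THEN conjunct2]
  proof eventually_elim
    case (elim w)
    show ?case
    proof (intro allI)
      fix i j :: 'n
      have "\<bar>(X w ** Y w) $i$j\<bar> \<le> (\<Sum>k\<in>UNIV. \<bar>X w $i$k * Y w $k$j\<bar>)"
        unfolding matrix_matrix_mult_def by (simp add: sum_abs)
      also have "\<dots> \<le> (\<Sum>k\<in>(UNIV::'n set). K1 * K2)"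
        by (intro sum_mono) (auto simp: abs_mult intro!: mult_mono elim(1)[rule_format] elim(2)[rule_format] order_trans[OF abs_ge_zero])
      finally show "\<bar>(X w ** Y w) $i$j\<bar> \<le> of_nat CARD('n) * (K1*K2)" by simp
    qed
  qed
  with m show ?thesis unfolding bnd_def by auto
qed

lemma bnd_const: "bnd M (\<lambda>w. outer ones ones) 1"
  unfolding bnd_def outer_def ones_def by auto

lemma bnd_int: assumes "prob_space M" "bnd M X K" shows "integrable M (\<lambda>w. X w $i$j)"
proof -
  interpret prob_space M by fact
  have "AE w in M. norm (X w $i$j) \<le> K"
    using assms(2)[unfolded bnd_def, THEN conjunct2] by eventually_elim auto
  then show ?thesis using assms(2) unfolding bnd_def
    by (auto intro!: integrable_const_bound[where B=K])
qed

lemma qf: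
  assumes "\<forall>i j. integrable M (\<lambda>w. X w $i$j)"
  shows "x \<bullet> (mexp M X *v x) = (\<integral>w. x \<bullet> (X w *v x) \<partial>M)"
    and "integrable M (\<lambda>w. x \<bullet> (X w *v x))"
  using assms
  by (simp_all add: inner_vec_def matrix_vector_mult_def mexp_def sum_distrib_left)


lemma bnd_lap:
  fixes A :: "'w \<Rightarrow> real^'n^'n"
  assumes m: "\<forall>i j. (\<lambda>w. A w $ i $ j) \<in> borel_measurable M"
    and nn: "\<forall>w\<in>space M. \<forall>i j. i \<noteq> j \<longrightarrow> A w $ i $ j \<ge> 0"
    and a: "\<alpha> > 0"
    and ae: "AE w in M. \<forall>i. 1 - (\<Sum>j\<in>UNIV - {i}. A w $ i $ j) \<ge> \<alpha>"
  shows "bnd M (\<lambda>w. laplacian (A w)) 1"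
proof -
  have meas: "(\<lambda>w. laplacian (A w) $i$j) \<in> borel_measurable M" for i j
    using m by (cases "i = j") (auto simp: laplacian_def intro!: borel_measurable_sum)
  have "AE w in M. \<forall>i j. \<bar>laplacian (A w) $i$j\<bar> \<le> 1"
    using ae AE_space
  proof eventually_elim
    case (elim w)
    show ?case
    proof (intro allI)
      fix i j :: 'n
      have s0: "0 \<le> (\<Sum>j\<in>UNIV - {i}. A w $ i $ j)"
        by (intro sum_nonneg) (use nn elim(2) in auto)
      have s1: "(\<Sum>j\<in>UNIV - {i}. A w $ i $ j) \<le> 1"
        using elim(1) a by (smt (verit))
      show "\<bar>laplacian (A w) $i$j\<bar> \<le> 1"
      proof (cases "i = j")
        case True then show ?thesis using s0 s1 by (simp add: laplacian_def)
      next
        case False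
        have "A w $ i $ j \<le> (\<Sum>j\<in>UNIV - {i}. A w $ i $ j)"
          using False nn elim(2) by (intro member_le_sum) auto
        then show ?thesis using False nn elim(2) s1 by (simp add: laplacian_def)
      qed
    qed
  qed
  then show ?thesis using meas unfolding bnd_def by auto
qed

theorem lemma2:
  fixes M :: "'w measure" and A :: "'w \<Rightarrow> real^'n^'n" and \<alpha> \<beta> :: real
  assumes "prob_space M"
    and "\<forall>i j. (\<lambda>w. A w $ i $ j) \<in> borel_measurable M"
    and "\<forall>w\<in>space M. \<forall>i j. i \<noteq> j \<longrightarrow> A w $ i $ j \<ge> 0"
    and "\<alpha> > 0"
    and "AE w in M. \<forall>i. 1 - (\<Sum>j\<in>UNIV - {i}. A w $ i $ j) \<ge> \<alpha>"
    and "ones v* mexp M (\<lambda>w. laplacian (A w)) = 0"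
    and "\<beta> > 0"
    and "mat_le (mexp M (\<lambda>w. transpose (laplacian (A w)) ** outer ones ones ** laplacian (A w)))
                (\<beta> *\<^sub>R mexp M (\<lambda>w. laplacian (A w) + transpose (laplacian (A w))))"
  shows "mat_le (mexp M (\<lambda>w. transpose (laplacian (A w)) ** outer ones ones ** laplacian (A w)))
                ((\<beta> / \<alpha>) *\<^sub>R mexp M (\<lambda>w. laplacian (A w) + transpose (laplacian (A w))
                                        - transpose (laplacian (A w)) ** laplacian (A w)))"
proof -
  note P = assms(1)
  define L where "L = (\<lambda>w. laplacian (A w))"
  have bL: "bnd M L 1" unfolding L_def using assms(2-5) by (rule bnd_lap)
  have bLt: "bnd M (\<lambda>w. transpose (L w)) 1" using bL by (rule bnd_transpose)
  define F1 where "F1 = (\<lambda>w. transpose (L w) ** outer ones ones ** L w)"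
  define F2 where "F2 = (\<lambda>w. L w + transpose (L w))"
  define F3 where "F3 = (\<lambda>w. L w + transpose (L w) - transpose (L w) ** L w)"
  obtain K1 where b1: "bnd M F1 K1"
    using bnd_mult[OF bnd_mult[OF bLt bnd_const] bL] unfolding F1_def by blast
  obtain K2 where b2: "bnd M F2 K2"
    using bnd_plus[OF bL bLt] unfolding F2_def by blast
  obtain K3 where b3: "bnd M F3 K3"
    using bnd_minus[OF bnd_plus[OF bL bLt] bnd_mult[OF bLt bL]] unfolding F3_def by blast
  have i1: "\<forall>i j. integrable M (\<lambda>w. F1 w $i$j)" using bnd_int[OF P b1] by blast
  have i2: "\<forall>i j. integrable M (\<lambda>w. F2 w $i$j)" using bnd_int[OF P b2] by blast
  have i3: "\<forall>i j. integrable M (\<lambda>w. F3 w $i$j)" using bnd_int[OF P b3] by blast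
  have iL: "\<And>i j. integrable M (\<lambda>w. L w $i$j)" using bnd_int[OF P bL] by blast
  show ?thesis
    unfolding mat_le_def
  proof
    fix x :: "real^'n"
    have h: "x \<bullet> (mexp M F1 *v x) - \<beta> * (x \<bullet> (mexp M F2 *v x)) \<le> 0"
      using assms(8) unfolding mat_le_def F1_def F2_def L_def
      by (simp add: matrix_vector_mult_diff_rdistrib scaleR_matrix_vector_assoc[symmetric] inner_diff_right)
    define c where "c = (\<lambda>w j. (ones v* L w)$j)"
    have ic: "integrable M (\<lambda>w. c w j)" for j
      unfolding c_def vector_matrix_mult_def ones_def using iL by simp
    have Ec: "(\<integral>w. c w j \<partial>M) = 0" for j
    proof -
      have "(\<integral>w. c w j \<partial>M) = (ones v* mexp M L) $ j"
        unfolding c_def vector_matrix_mult_def ones_def mexp_def using iL by simp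
      then show ?thesis using assms(6) unfolding L_def by simp
    qed
    define g where "g = (\<lambda>w. (1-\<alpha>) * (\<Sum>j\<in>UNIV. c w j * (x$j)^2))"
    have ig: "integrable M g" unfolding g_def using ic by simp
    have Eg: "(\<integral>w. g w \<partial>M) = 0" unfolding g_def using ic Ec by simp
    have AEp: "AE w in M. g w \<le> x \<bullet> (F3 w *v x) - \<alpha> * (x \<bullet> (F2 w *v x))"
      using assms(5) AE_space
    proof eventually_elim
      case (elim w)
      show ?case unfolding g_def c_def F3_def F2_def L_def
        by (rule pointwise) (use assms(3) elim in auto)
    qed
    have "0 \<le> (\<integral>w. x \<bullet> (F3 w *v x) - \<alpha> * (x \<bullet> (F2 w *v x)) \<partial>M)"
      using integral_mono_AE[OF ig _ AEp] qf(2)[OF i3] qf(2)[OF i2] Eg by simp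
    also have "\<dots> = x \<bullet> (mexp M F3 *v x) - \<alpha> * (x \<bullet> (mexp M F2 *v x))"
      using qf[OF i3] qf[OF i2] by simp
    finally have k: "\<alpha> * (x \<bullet> (mexp M F2 *v x)) \<le> x \<bullet> (mexp M F3 *v x)" by simp
    have "\<beta> * (x \<bullet> (mexp M F2 *v x)) = (\<beta>/\<alpha>) * (\<alpha> * (x \<bullet> (mexp M F2 *v x)))"
      using assms(4) by simp
    also have "\<dots> \<le> (\<beta>/\<alpha>) * (x \<bullet> (mexp M F3 *v x))"
      using k assms(4,7) by (intro mult_left_mono) auto
    finally have "x \<bullet> (mexp M F1 *v x) - (\<beta>/\<alpha>) * (x \<bullet> (mexp M F3 *v x)) \<le> 0" using h by simp
    then show "x \<bullet> ((mexp M (\<lambda>w. transpose (laplacian (A w)) ** outer ones ones ** laplacian (A w)) -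
           (\<beta> / \<alpha>) *\<^sub>R mexp M (\<lambda>w. laplacian (A w) + transpose (laplacian (A w))
                                        - transpose (laplacian (A w)) ** laplacian (A w))) *v x) \<le> 0"
      unfolding F1_def F3_def L_def
      by (simp add: matrix_vector_mult_diff_rdistrib scaleR_matrix_vector_assoc[symmetric] inner_diff_right)
  qed
qed

end
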